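(* (1) A field $F$ is $n$-torsion clean if and only if $F$ is finite and $n=|F|-1$. (2) A finite product of finite fields $\mathbb{F}_{p_1^{k_1}}\times\cdots\times\mathbb{F}_{p_t^{k_t}}$ is $n$-torsion clean, where $n=\mathrm{LCM}(p_1^{k_1}-1,\ldots,p_t^{k_t}-1)$. (3) A product $\prod_{i\in I}F_i$ of fields is $n$-torsion clean if and only if all fields $F_i$, $i\in I$, are finite and $\mathrm{LCM}(|F_i|-1\mid i\in I)$ exists and equals $n$. (4) Let $R$ be a subdirect product of fields $F_i$, $i\in I$. Then $R$ is $n$-torsion clean if and only if $\prod_{i\in I}F_i$ is $n$-torsion clean.
   Context: All rings are associative with identity; $\mathbb{F}_m$ denotes the field with $m$ elements. A ring $R$ is $n$-torsion clean if every $r\in R$ can be written $r=e+u$ with $e^2=e$, $u$ a unit, $u^n=1$, and $n$ is the smallest natural number with this property. $\mathrm{LCM}(|F_i|-1\mid i\in I)$ exists means the set $\{|F_i|-1\mid i\in I\}$ has a least common multiple in $\mathbb{N}$. *)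

theory Defs
  imports "HOL-Algebra.Ring"
begin

definition torsion_clean_with :: "('a, 'b) ring_scheme \<Rightarrow> nat \<Rightarrow> bool" where
  "torsion_clean_with R n \<longleftrightarrow>
     (\<forall>r \<in> carrier R. \<exists>e u. e \<in> carrier R \<and> e \<otimes>\<^bsub>R\<^esub> e = e \<and>
        u \<in> Units R \<and> u [^]\<^bsub>R\<^esub> n = \<one>\<^bsub>R\<^esub> \<and> r = e \<oplus>\<^bsub>R\<^esub> u)"

definition n_torsion_clean :: "('a, 'b) ring_scheme \<Rightarrow> nat \<Rightarrow> bool" where
  "n_torsion_clean R n \<longleftrightarrow> 1 \<le> n \<and> torsion_clean_with R n \<and>
     (\<forall>m. 1 \<le> m \<and> m < n \<longrightarrow> \<not> torsion_clean_with R m)"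

definition prod_ring :: "'i set \<Rightarrow> ('i \<Rightarrow> ('a, 'b) ring_scheme) \<Rightarrow> ('i \<Rightarrow> 'a) ring" where
  "prod_ring I F =
     \<lparr> carrier = (\<Pi>\<^sub>E i\<in>I. carrier (F i)),
       monoid.mult = (\<lambda>x y. \<lambda>i\<in>I. x i \<otimes>\<^bsub>F i\<^esub> y i),
       one = (\<lambda>i\<in>I. \<one>\<^bsub>F i\<^esub>),
       zero = (\<lambda>i\<in>I. \<zero>\<^bsub>F i\<^esub>),
       add = (\<lambda>x y. \<lambda>i\<in>I. x i \<oplus>\<^bsub>F i\<^esub> y i) \<rparr>"

definition is_LCM :: "nat set \<Rightarrow> nat \<Rightarrow> bool" where
  "is_LCM S n \<longleftrightarrow> 0 < n \<and> (\<forall>s \<in> S. s dvd n) \<and>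
     (\<forall>m. 0 < m \<and> (\<forall>s \<in> S. s dvd m) \<longrightarrow> n \<le> m)"

definition subdirect_product :: "('c, 'd) ring_scheme \<Rightarrow> 'i set \<Rightarrow> ('i \<Rightarrow> ('a, 'b) ring_scheme)
    \<Rightarrow> ('c \<Rightarrow> 'i \<Rightarrow> 'a) \<Rightarrow> bool" where
  "subdirect_product R I F h \<longleftrightarrow>
     h \<in> ring_hom R (prod_ring I F) \<and> inj_on h (carrier R) \<and>
     (\<forall>i \<in> I. (\<lambda>r. h r i) ` carrier R = carrier (F i))"

end

theory Submission imports Defs "HOL-Algebra.Multiplicative_Group" "HOL-Algebra.Polynomial_Divisibility"
begin


lemma (in field) idem_01:
  assumes "e \<in> carrier R" "e \<otimes> e = e" shows "e = \<zero> \<or> e = \<one>"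
proof (rule ccontr)
  assume "\<not> (e = \<zero> \<or> e = \<one>)"
  then have "e \<in> Units R" using assms field_Units by auto
  then have "inv e \<otimes> (e \<otimes> e) = inv e \<otimes> e" using assms by simp
  then have "e = \<one>" using assms \<open>e \<in> Units R\<close>
    by (metis Units_inv_closed Units_l_inv l_one m_assoc)
  then show False using \<open>\<not> _\<close> by simp
qed

lemma (in field) cover:
  assumes "\<forall>r\<in>carrier R. \<exists>e u. e \<in> carrier R \<and> e \<otimes> e = e \<and> u \<in> carrier R \<and>
              u [^] (m::nat) = \<one> \<and> r = e \<oplus> u"
  shows "carrier R \<subseteq> {x\<in>carrier R. x [^] m = \<one>} \<union> (\<lambda>x. x \<oplus> \<one>) ` {x\<in>carrier R. x [^] m = \<one>}"
proof
  fix r assume r: "r \<in> carrier R"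
  then obtain e u where eu: "e \<in> carrier R" "e \<otimes> e = e" "u \<in> carrier R" "u [^] m = \<one>" "r = e \<oplus> u"
    using assms by blast
  from idem_01[OF eu(1,2)] show "r \<in> {x\<in>carrier R. x [^] m = \<one>} \<union> (\<lambda>x. x \<oplus> \<one>) ` {x\<in>carrier R. x [^] m = \<one>}"
  proof
    assume "e = \<zero>" then show ?thesis using eu by auto
  next
    assume "e = \<one>" then have "r = u \<oplus> \<one>" using eu by (simp add: add.m_comm)
    then show ?thesis using eu by auto
  qed
qed

lemma (in field) roots_finite:
  assumes "m \<ge> 1" shows "finite {x\<in>carrier R. x [^] (m::nat) = \<one>}"
proof -
  define p where "p = monom \<one> (m - 1) @ [\<ominus> \<one>]"
  have pc: "p \<in> carrier (poly_ring R)"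
    unfolding p_def sym[OF univ_poly_carrier] polynomial_def monom_def by auto
  have ev: "eval p x = x [^] m \<ominus> \<one>" if "x \<in> carrier R" for x
  proof -
    have "eval p x = (eval (monom \<one> (m - 1)) x \<otimes> x) \<oplus> \<ominus> \<one>"
      unfolding p_def using eval_append_aux[OF monom_in_carrier[of \<one> "m-1"] _ that] by simp
    also have "\<dots> = x [^] (m - 1) \<otimes> x \<oplus> \<ominus> \<one>" using eval_monom[OF one_closed that] that by simp
    also have "\<dots> = x [^] m \<ominus> \<one>" using assms
      by (metis One_nat_def Suc_pred less_eq_Suc_le minus_eq nat_pow_Suc)
    finally show ?thesis .
  qed
  have "{x\<in>carrier R. x [^] m = \<one>} \<subseteq> {x. is_root p x}"
    unfolding is_root_def using ev by (auto simp: p_def)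
  then show ?thesis using finite_number_of_roots[OF pc] finite_subset by blast
qed

lemma (in field) pow_card:
  assumes "finite (carrier R)" "x \<in> carrier R" "x \<noteq> \<zero>"
  shows "x [^] (card (carrier R) - 1) = \<one>"
proof -
  interpret G: group "Multiplicative_Group.mult_of R" by (rule field_mult_group)
  have "x [^]\<^bsub>Multiplicative_Group.mult_of R\<^esub> order (Multiplicative_Group.mult_of R) = \<one>\<^bsub>Multiplicative_Group.mult_of R\<^esub>"
    using assms by (intro G.pow_order_eq_1) simp
  then show ?thesis using order_mult_of[OF assms(1)]
    by (simp add: Multiplicative_Group.nat_pow_mult_of order_def)
qed

lemma (in field) F2:
  assumes m: "m \<ge> 1"
    and h: "\<forall>r\<in>carrier R. \<exists>e u. e \<in> carrier R \<and> e \<otimes> e = e \<and> u \<in> carrier R \<and>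
              u [^] (m::nat) = \<one> \<and> r = e \<oplus> u"
  shows "finite (carrier R) \<and> (card (carrier R) - 1) dvd m"
proof -
  define H where "H = {x\<in>carrier R. x [^] m = \<one>}"
  have cov: "carrier R \<subseteq> H \<union> (\<lambda>x. x \<oplus> \<one>) ` H" unfolding H_def by (rule cover[OF h])
  have fH: "finite H" unfolding H_def by (rule roots_finite[OF m])
  have fin: "finite (carrier R)" using cov fH finite_subset by blast
  have cardle: "card (carrier R) \<le> 2 * card H"
  proof -
    have "card (carrier R) \<le> card (H \<union> (\<lambda>x. x \<oplus> \<one>) ` H)" using cov fH by (intro card_mono) auto
    also have "\<dots> \<le> card H + card ((\<lambda>x. x \<oplus> \<one>) ` H)" by (rule card_Un_le)
    also have "\<dots> \<le> card H + card H" using card_image_le[OF fH] by simp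
    finally show ?thesis by simp
  qed
  define q where "q = card (carrier R)"
  have "card {\<zero>, \<one>} \<le> card (carrier R)" by (rule card_mono[OF fin]) simp
  then have q2: "q \<ge> 2" unfolding q_def by simp
  define d where "d = gcd m (q - 1)"
  have d0: "d \<noteq> 0" using m unfolding d_def by simp
  obtain a b where ab: "m * a = (q - 1) * b + d" using bezout_nat[of m "q - 1"] m unfolding d_def by auto
  have Hsub: "H \<subseteq> {x\<in>carrier R. x [^] d = \<one>}"
  proof
    fix x assume x: "x \<in> H"
    then have xc: "x \<in> carrier R" and xm: "x [^] m = \<one>" unfolding H_def by auto
    have "x \<noteq> \<zero>"
    proof
      assume "x = \<zero>" then have "x [^] m = \<zero>" using m nat_pow_zero[of m] by simp
      then show False using xm by simp
    qed
    then have xq: "x [^] (q - 1) = \<one>" using pow_card[OF fin xc] unfolding q_def by simp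
    have "\<one> = (x [^] m) [^] a" using xm by simp
    also have "\<dots> = x [^] (m * a)" using xc by (rule nat_pow_pow)
    also have "\<dots> = x [^] ((q - 1) * b + d)" using ab by simp
    also have "\<dots> = x [^] ((q - 1) * b) \<otimes> x [^] d" using xc by (rule nat_pow_mult[symmetric])
    also have "\<dots> = ((x [^] (q - 1)) [^] b) \<otimes> x [^] d" using xc by (simp only: nat_pow_pow)
    also have "\<dots> = x [^] d" using xq xc by simp
    finally show "x \<in> {x\<in>carrier R. x [^] d = \<one>}" using xc by simp
  qed
  have fD: "finite {x\<in>carrier R. x [^] d = \<one>}" using fin by simp
  have "card H \<le> card {x\<in>carrier R. x [^] d = \<one>}" by (rule card_mono[OF fD Hsub])
  also have "\<dots> \<le> d" by (rule num_roots_le_deg[OF fin d0])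
  finally have cH: "card H \<le> d" .
  show ?thesis
  proof (rule ccontr)
    assume "\<not> ?thesis"
    then have nd: "\<not> (q - 1) dvd m" using fin unfolding q_def by simp
    have "d dvd q - 1" unfolding d_def by simp
    then obtain k where k: "q - 1 = d * k" by blast
    have "k \<noteq> 0" proof assume "k = 0" then show False using k q2 by simp qed
    moreover have "k \<noteq> 1"
    proof
      assume "k = 1" then have "q - 1 = d" using k by simp
      then show False using nd unfolding d_def by (metis gcd_dvd1)
    qed
    ultimately have "k \<ge> 2" by simp
    then have "d * 2 \<le> q - 1" using k by (metis mult_le_mono2)
    then show False using cardle cH q2 unfolding q_def by linarith
  qed
qed

lemma (in field) pow_dvd:
  assumes "finite (carrier R)" "(card (carrier R) - 1) dvd m" "x \<in> carrier R" "x \<noteq> \<zero>"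
  shows "x [^] (m::nat) = \<one>"
proof -
  obtain k where k: "m = (card (carrier R) - 1) * k" using assms(2) by blast
  have "x [^] m = (x [^] (card (carrier R) - 1)) [^] k" using assms(3) k by (simp add: nat_pow_pow)
  then show ?thesis using pow_card[OF assms(1,3,4)] by simp
qed

lemma (in field) F3:
  assumes "finite (carrier R)" "(card (carrier R) - 1) dvd m"
  shows "torsion_clean_with R m"
  unfolding torsion_clean_with_def
proof
  fix r assume r: "r \<in> carrier R"
  show "\<exists>e u. e \<in> carrier R \<and> e \<otimes> e = e \<and> u \<in> Units R \<and> u [^] m = \<one> \<and> r = e \<oplus> u"
  proof (cases "r = \<zero>")
    case True
    have "\<ominus> \<one> \<noteq> \<zero>" by (metis add.inv_eq_1_iff one_closed zero_not_one)
    moreover have "\<ominus> \<one> \<in> carrier R" by simp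
    ultimately have "\<ominus> \<one> \<in> Units R" "(\<ominus> \<one>) [^] m = \<one>"
      using field_Units pow_dvd[OF assms] by simp_all
    then show ?thesis using True by (intro exI[of _ \<one>] exI[of _ "\<ominus> \<one>"]) (simp add: r_neg)
  next
    case False
    have "r \<in> Units R" using False r field_Units by simp
    moreover have "r [^] m = \<one>" using pow_dvd[OF assms r False] .
    ultimately show ?thesis using r by (intro exI[of _ \<zero>] exI[of _ r]) simp
  qed
qed

lemma field_tc_iff:
  assumes "field F" "m \<ge> 1"
  shows "torsion_clean_with F m \<longleftrightarrow> finite (carrier F) \<and> (card (carrier F) - 1) dvd m"
proof
  interpret field F by fact
  assume tc: "torsion_clean_with F m"
  show "finite (carrier F) \<and> (card (carrier F) - 1) dvd m"
  proof (rule F2[OF assms(2)], intro ballI)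
    fix r assume "r \<in> carrier F"
    then obtain e u where eu: "e \<in> carrier F" "e \<otimes>\<^bsub>F\<^esub> e = e" "u \<in> Units F"
      "u [^]\<^bsub>F\<^esub> m = \<one>\<^bsub>F\<^esub>" "r = e \<oplus>\<^bsub>F\<^esub> u"
      using tc unfolding torsion_clean_with_def by blast
    have "u \<in> carrier F" using eu(3) by (rule Units_closed)
    then show "\<exists>e u. e \<in> carrier F \<and> e \<otimes>\<^bsub>F\<^esub> e = e \<and> u \<in> carrier F \<and>
              u [^]\<^bsub>F\<^esub> m = \<one>\<^bsub>F\<^esub> \<and> r = e \<oplus>\<^bsub>F\<^esub> u" using eu by blast
  qed
next
  interpret field F by fact
  assume "finite (carrier F) \<and> (card (carrier F) - 1) dvd m"
  then show "torsion_clean_with F m" by (elim conjE) (rule F3)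
qed

lemma field_01: assumes "field F" shows "\<zero>\<^bsub>F\<^esub> \<in> carrier F" "\<one>\<^bsub>F\<^esub> \<in> carrier F"
proof - interpret field F by fact show "\<zero>\<^bsub>F\<^esub> \<in> carrier F" "\<one>\<^bsub>F\<^esub> \<in> carrier F" by simp_all qed

lemma prod_carrier: "carrier (prod_ring I F) = (\<Pi>\<^sub>E i\<in>I. carrier (F i))"
  by (simp add: prod_ring_def)
lemma prod_mult: "x \<otimes>\<^bsub>prod_ring I F\<^esub> y = (\<lambda>i\<in>I. x i \<otimes>\<^bsub>F i\<^esub> y i)"
  by (simp add: prod_ring_def)
lemma prod_add: "x \<oplus>\<^bsub>prod_ring I F\<^esub> y = (\<lambda>i\<in>I. x i \<oplus>\<^bsub>F i\<^esub> y i)"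
  by (simp add: prod_ring_def)
lemma prod_one: "\<one>\<^bsub>prod_ring I F\<^esub> = (\<lambda>i\<in>I. \<one>\<^bsub>F i\<^esub>)"
  by (simp add: prod_ring_def)
lemma prod_pow: "x [^]\<^bsub>prod_ring I F\<^esub> (k::nat) = (\<lambda>i\<in>I. x i [^]\<^bsub>F i\<^esub> k)"
  by (induct k) (auto simp: prod_mult prod_one)

lemma PiE_eqI: "f \<in> (\<Pi>\<^sub>E i\<in>I. A i) \<Longrightarrow> g \<in> (\<Pi>\<^sub>E i\<in>I. B i) \<Longrightarrow> (\<And>i. i \<in> I \<Longrightarrow> f i = g i) \<Longrightarrow> f = g"
  by (metis PiE_E ext)

lemma prod_tc_iff:
  assumes fields: "\<forall>i\<in>I. field (F i)" and m: "m \<ge> 1"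
  shows "torsion_clean_with (prod_ring I F) m \<longleftrightarrow>
         (\<forall>i\<in>I. finite (carrier (F i)) \<and> (card (carrier (F i)) - 1) dvd m)"
proof
  assume tc: "torsion_clean_with (prod_ring I F) m"
  show "\<forall>i\<in>I. finite (carrier (F i)) \<and> (card (carrier (F i)) - 1) dvd m"
  proof
    fix i assume i: "i \<in> I"
    interpret field "F i" using fields i by simp
    show "finite (carrier (F i)) \<and> (card (carrier (F i)) - 1) dvd m"
    proof (rule F2[OF m], intro ballI)
      fix r assume r: "r \<in> carrier (F i)"
      define x where "x = (\<lambda>j\<in>I. if j = i then r else \<zero>\<^bsub>F j\<^esub>)"
      have "x \<in> carrier (prod_ring I F)" unfolding x_def prod_carrier using r fields
        by (auto simp: field_01)
      then obtain e u where eu: "e \<in> carrier (prod_ring I F)" "e \<otimes>\<^bsub>prod_ring I F\<^esub> e = e"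
        "u \<in> Units (prod_ring I F)" "u [^]\<^bsub>prod_ring I F\<^esub> m = \<one>\<^bsub>prod_ring I F\<^esub>"
        "x = e \<oplus>\<^bsub>prod_ring I F\<^esub> u"
        using tc unfolding torsion_clean_with_def by blast
      have uc: "u \<in> carrier (prod_ring I F)" using eu(3) by (simp add: Units_def)
      show "\<exists>e u. e \<in> carrier (F i) \<and> e \<otimes>\<^bsub>F i\<^esub> e = e \<and> u \<in> carrier (F i) \<and>
              u [^]\<^bsub>F i\<^esub> m = \<one>\<^bsub>F i\<^esub> \<and> r = e \<oplus>\<^bsub>F i\<^esub> u"
      proof (intro exI conjI)
        show "e i \<in> carrier (F i)" using eu(1) i by (auto simp: prod_carrier)
        show "u i \<in> carrier (F i)" using uc i by (auto simp: prod_carrier)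
        show "e i \<otimes>\<^bsub>F i\<^esub> e i = e i" using fun_cong[OF eu(2), of i] i by (simp add: prod_mult)
        show "u i [^]\<^bsub>F i\<^esub> m = \<one>\<^bsub>F i\<^esub>" using fun_cong[OF eu(4), of i] i by (simp add: prod_pow prod_one)
        show "r = e i \<oplus>\<^bsub>F i\<^esub> u i" using fun_cong[OF eu(5), of i] i by (simp add: prod_add x_def)
      qed
    qed
  qed
next
  assume H: "\<forall>i\<in>I. finite (carrier (F i)) \<and> (card (carrier (F i)) - 1) dvd m"
  show "torsion_clean_with (prod_ring I F) m"
    unfolding torsion_clean_with_def
  proof
    fix x assume x: "x \<in> carrier (prod_ring I F)"
    define e where "e = (\<lambda>i\<in>I. if x i = \<zero>\<^bsub>F i\<^esub> then \<one>\<^bsub>F i\<^esub> else \<zero>\<^bsub>F i\<^esub>)"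
    define u where "u = (\<lambda>i\<in>I. if x i = \<zero>\<^bsub>F i\<^esub> then \<ominus>\<^bsub>F i\<^esub> \<one>\<^bsub>F i\<^esub> else x i)"
    define v where "v = (\<lambda>i\<in>I. inv\<^bsub>F i\<^esub> (u i))"
    have xi: "x i \<in> carrier (F i)" if "i \<in> I" for i using x that by (auto simp: prod_carrier)
    have ui: "u i \<in> carrier (F i) - {\<zero>\<^bsub>F i\<^esub>}" if i: "i \<in> I" for i
    proof -
      interpret field "F i" using fields i by simp
      have "\<ominus>\<^bsub>F i\<^esub> \<one>\<^bsub>F i\<^esub> \<noteq> \<zero>\<^bsub>F i\<^esub>" by (metis add.inv_eq_1_iff one_closed zero_not_one)
      then show ?thesis using xi[OF i] i unfolding u_def by auto
    qed
    have upow: "u i [^]\<^bsub>F i\<^esub> m = \<one>\<^bsub>F i\<^esub>" if i: "i \<in> I" for i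
    proof -
      interpret field "F i" using fields i by simp
      show ?thesis using pow_dvd[of m "u i"] H i ui[OF i] by auto
    qed
    have uc: "u \<in> carrier (prod_ring I F)" unfolding prod_carrier using ui
      by (auto simp: u_def)
    have invc: "inv\<^bsub>F i\<^esub> (u i) \<in> carrier (F i)" if i: "i \<in> I" for i
    proof -
      interpret field "F i" using fields i by simp
      show ?thesis using ui[OF i] field_Units by auto
    qed
    have vc: "v \<in> carrier (prod_ring I F)" unfolding prod_carrier v_def using invc by auto
    have vu: "v \<otimes>\<^bsub>prod_ring I F\<^esub> u = \<one>\<^bsub>prod_ring I F\<^esub>" "u \<otimes>\<^bsub>prod_ring I F\<^esub> v = \<one>\<^bsub>prod_ring I F\<^esub>"
      unfolding prod_mult prod_one
    proof -
      have "v i \<otimes>\<^bsub>F i\<^esub> u i = \<one>\<^bsub>F i\<^esub> \<and> u i \<otimes>\<^bsub>F i\<^esub> v i = \<one>\<^bsub>F i\<^esub>" if i: "i \<in> I" for i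
      proof -
        interpret field "F i" using fields i by simp
        show ?thesis using ui[OF i] field_Units i by (auto simp: v_def)
      qed
      then show "(\<lambda>i\<in>I. v i \<otimes>\<^bsub>F i\<^esub> u i) = (\<lambda>i\<in>I. \<one>\<^bsub>F i\<^esub>)"
        "(\<lambda>i\<in>I. u i \<otimes>\<^bsub>F i\<^esub> v i) = (\<lambda>i\<in>I. \<one>\<^bsub>F i\<^esub>)" by (auto intro: restrict_ext)
    qed
    show "\<exists>e u. e \<in> carrier (prod_ring I F) \<and> e \<otimes>\<^bsub>prod_ring I F\<^esub> e = e \<and>
            u \<in> Units (prod_ring I F) \<and> u [^]\<^bsub>prod_ring I F\<^esub> m = \<one>\<^bsub>prod_ring I F\<^esub> \<and>
            x = e \<oplus>\<^bsub>prod_ring I F\<^esub> u"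
    proof (intro exI conjI)
      show "e \<in> carrier (prod_ring I F)" unfolding e_def prod_carrier using fields
        by (auto simp: field_01)
      show "e \<otimes>\<^bsub>prod_ring I F\<^esub> e = e"
        unfolding prod_mult
      proof (rule ext)
        fix i show "(\<lambda>i\<in>I. e i \<otimes>\<^bsub>F i\<^esub> e i) i = e i"
        proof (cases "i \<in> I")
          case True
          interpret field "F i" using fields True by simp
          show ?thesis using True by (simp add: e_def)
        qed (simp add: e_def)
      qed
      show "u \<in> Units (prod_ring I F)" unfolding Units_def using uc vc vu by blast
      show "u [^]\<^bsub>prod_ring I F\<^esub> m = \<one>\<^bsub>prod_ring I F\<^esub>"
        unfolding prod_pow prod_one using upow by (auto intro: restrict_ext)
      show "x = e \<oplus>\<^bsub>prod_ring I F\<^esub> u"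
        unfolding prod_add
      proof (rule ext)
        fix i show "x i = (\<lambda>i\<in>I. e i \<oplus>\<^bsub>F i\<^esub> u i) i"
        proof (cases "i \<in> I")
          case True
          interpret field "F i" using fields True by simp
          show ?thesis using True xi[OF True] by (simp add: e_def u_def r_neg)
        next
          case False then show ?thesis using x by (auto simp: prod_carrier PiE_def extensional_def)
        qed
      qed
    qed
  qed
qed



lemma hom_pow:
  assumes "ring R" "h \<in> ring_hom R S" "x \<in> carrier R"
  shows "h (x [^]\<^bsub>R\<^esub> (k::nat)) = h x [^]\<^bsub>S\<^esub> k"
proof (induct k)
  case 0 then show ?case using ring_hom_one[OF assms(2)] by simp
next
  case (Suc k)
  interpret ring R by fact
  show ?case using Suc ring_hom_mult[OF assms(2)] assms(3) by simp
qed

lemma (in ring) sub_tc_iff: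
  assumes fields: "\<forall>i\<in>I. field (F i)" and sd: "subdirect_product R I F h"
    and m: "m \<ge> 1"
  shows "torsion_clean_with R m \<longleftrightarrow>
         (\<forall>i\<in>I. finite (carrier (F i)) \<and> (card (carrier (F i)) - 1) dvd m)"
proof -
  have hom: "h \<in> ring_hom R (prod_ring I F)" and inj: "inj_on h (carrier R)"
    and surj: "\<And>i. i \<in> I \<Longrightarrow> (\<lambda>r. h r i) ` carrier R = carrier (F i)"
    using sd unfolding subdirect_product_def by auto
  have hc: "h x \<in> (\<Pi>\<^sub>E i\<in>I. carrier (F i))" if "x \<in> carrier R" for x
    using ring_hom_closed[OF hom that] by (simp add: prod_carrier)
  have hadd: "h (x \<oplus> y) i = h x i \<oplus>\<^bsub>F i\<^esub> h y i" if "x \<in> carrier R" "y \<in> carrier R" "i \<in> I" for x y i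
    using ring_hom_add[OF hom that(1,2)] that(3) by (simp add: prod_add)
  have hmult: "h (x \<otimes> y) i = h x i \<otimes>\<^bsub>F i\<^esub> h y i" if "x \<in> carrier R" "y \<in> carrier R" "i \<in> I" for x y i
    using ring_hom_mult[OF hom that(1,2)] that(3) by (simp add: prod_mult)
  have hone: "h \<one> i = \<one>\<^bsub>F i\<^esub>" if "i \<in> I" for i
    using ring_hom_one[OF hom] that by (simp add: prod_one)
  have hpow: "h (x [^] k) i = h x i [^]\<^bsub>F i\<^esub> k" if "x \<in> carrier R" "i \<in> I" for x i and k :: nat
    using hom_pow[OF ring_axioms hom that(1), of k] that(2) by (simp add: prod_pow)
  have eqI: "x = y" if "x \<in> carrier R" "y \<in> carrier R" "\<And>i. i \<in> I \<Longrightarrow> h x i = h y i" for x y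
  proof -
    have "h x = h y" by (rule PiE_eqI[OF hc[OF that(1)] hc[OF that(2)] that(3)])
    then show ?thesis using inj that(1,2) by (simp add: inj_on_def)
  qed
  show ?thesis
  proof
    assume tc: "torsion_clean_with R m"
    show "\<forall>i\<in>I. finite (carrier (F i)) \<and> (card (carrier (F i)) - 1) dvd m"
    proof
      fix i assume i: "i \<in> I"
      have "\<exists>e u. e \<in> carrier (F i) \<and> e \<otimes>\<^bsub>F i\<^esub> e = e \<and> u \<in> carrier (F i) \<and>
              u [^]\<^bsub>F i\<^esub> m = \<one>\<^bsub>F i\<^esub> \<and> r = e \<oplus>\<^bsub>F i\<^esub> u" if r: "r \<in> carrier (F i)" for r
      proof -
        obtain x where x: "x \<in> carrier R" "r = h x i" using surj[OF i] r by blast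
        then obtain e u where eu: "e \<in> carrier R" "e \<otimes> e = e" "u \<in> Units R" "u [^] m = \<one>" "x = e \<oplus> u"
          using tc unfolding torsion_clean_with_def by blast
        have uc: "u \<in> carrier R" using eu(3) by (rule Units_closed)
        show ?thesis
        proof (intro exI conjI)
          show "h e i \<in> carrier (F i)" using hc[OF eu(1)] i by auto
          show "h u i \<in> carrier (F i)" using hc[OF uc] i by auto
          show "h e i \<otimes>\<^bsub>F i\<^esub> h e i = h e i" using hmult[OF eu(1) eu(1) i] eu(2) by simp
          show "h u i [^]\<^bsub>F i\<^esub> m = \<one>\<^bsub>F i\<^esub>" using hpow[OF uc i, of m] eu(4) hone[OF i] by simp
          show "r = h e i \<oplus>\<^bsub>F i\<^esub> h u i" using hadd[OF eu(1) uc i] eu(5) x(2) by simp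
        qed
      qed
      then show "finite (carrier (F i)) \<and> (card (carrier (F i)) - 1) dvd m"
        using field.F2[OF _ m] fields i by blast
    qed
  next
    assume H: "\<forall>i\<in>I. finite (carrier (F i)) \<and> (card (carrier (F i)) - 1) dvd m"
    show "torsion_clean_with R m" unfolding torsion_clean_with_def
    proof
      fix x assume x: "x \<in> carrier R"
      define s where "s = x [^] m"
      define e where "e = \<one> \<ominus> s"
      define u where "u = x \<ominus> e"
      have sc: "s \<in> carrier R" unfolding s_def using x by simp
      have ec: "e \<in> carrier R" unfolding e_def using sc by simp
      have uc: "u \<in> carrier R" unfolding u_def using ec x by simp
      have es: "e \<oplus> s = \<one>" unfolding e_def using sc by (simp add: minus_eq a_assoc l_neg)
      have xeu: "x = e \<oplus> u" unfolding u_def using x ec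
        by (simp add: minus_eq add.m_lcomm[of e x] r_neg)
      have comp: "(h x i = \<zero>\<^bsub>F i\<^esub> \<longrightarrow> h e i = \<one>\<^bsub>F i\<^esub> \<and> h u i = \<ominus>\<^bsub>F i\<^esub> \<one>\<^bsub>F i\<^esub>) \<and>
                  (h x i \<noteq> \<zero>\<^bsub>F i\<^esub> \<longrightarrow> h e i = \<zero>\<^bsub>F i\<^esub> \<and> h u i = h x i)" if i: "i \<in> I" for i
      proof -
        interpret F: field "F i" using fields i by simp
        have y: "h x i \<in> carrier (F i)" using hc[OF x] i by auto
        have ei: "h e i \<in> carrier (F i)" using hc[OF ec] i by auto
        have ui: "h u i \<in> carrier (F i)" using hc[OF uc] i by auto
        have es': "h e i \<oplus>\<^bsub>F i\<^esub> h x i [^]\<^bsub>F i\<^esub> m = \<one>\<^bsub>F i\<^esub>"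
          using hadd[OF ec sc i] es hone[OF i] hpow[OF x i, of m] unfolding s_def by simp
        have xeu': "h x i = h e i \<oplus>\<^bsub>F i\<^esub> h u i" using hadd[OF ec uc i] xeu by simp
        show ?thesis
        proof (intro conjI impI)
          assume y0: "h x i = \<zero>\<^bsub>F i\<^esub>"
          then have "h x i [^]\<^bsub>F i\<^esub> m = \<zero>\<^bsub>F i\<^esub>" using m F.nat_pow_zero[of m] by simp
          then show e1: "h e i = \<one>\<^bsub>F i\<^esub>" using es' ei by simp
          show "h u i = \<ominus>\<^bsub>F i\<^esub> \<one>\<^bsub>F i\<^esub>" using xeu' y0 e1 ui
            by (metis F.add.inv_closed F.minus_equality F.one_closed F.add.m_comm)
        next
          assume y0: "h x i \<noteq> \<zero>\<^bsub>F i\<^esub>"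
          then have "h x i [^]\<^bsub>F i\<^esub> m = \<one>\<^bsub>F i\<^esub>" using F.pow_dvd H i y by blast
          then show e0: "h e i = \<zero>\<^bsub>F i\<^esub>" using es' ei
            by (metis F.l_zero F.one_closed F.add.right_cancel F.zero_closed)
          show "h u i = h x i" using xeu' e0 ui by simp
        qed
      qed
      have upow: "u [^] m = \<one>"
      proof (rule eqI)
        fix i assume i: "i \<in> I"
        interpret F: field "F i" using fields i by simp
        have "h u i [^]\<^bsub>F i\<^esub> m = \<one>\<^bsub>F i\<^esub>"
        proof (cases "h x i = \<zero>\<^bsub>F i\<^esub>")
          case True
          have "\<ominus>\<^bsub>F i\<^esub> \<one>\<^bsub>F i\<^esub> \<noteq> \<zero>\<^bsub>F i\<^esub>" by (metis F.add.inv_eq_1_iff F.one_closed F.zero_not_one)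
          then show ?thesis using comp[OF i] True F.pow_dvd H i by simp
        next
          case False
          then show ?thesis using comp[OF i] F.pow_dvd H i hc[OF x] by auto
        qed
        then show "h (u [^] m) i = h \<one> i" using hpow[OF uc i] hone[OF i] by simp
      qed (use uc in simp_all)
      have eidem: "e \<otimes> e = e"
      proof (rule eqI)
        fix i assume i: "i \<in> I"
        interpret F: field "F i" using fields i by simp
        show "h (e \<otimes> e) i = h e i" using hmult[OF ec ec i] comp[OF i] by (cases "h x i = \<zero>\<^bsub>F i\<^esub>") auto
      qed (use ec in simp_all)
      have uU: "u \<in> Units R"
      proof -
        obtain k where k: "m = Suc k" using m by (cases m) auto
        have "u [^] k \<otimes> u = \<one>" "u \<otimes> u [^] k = \<one>" using upow uc k by (simp_all add: nat_pow_Suc2[symmetric])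
        then show ?thesis unfolding Units_def using uc by auto
      qed
      show "\<exists>e u. e \<in> carrier R \<and> e \<otimes> e = e \<and> u \<in> Units R \<and> u [^] m = \<one> \<and> x = e \<oplus> u"
        using ec eidem uU upow xeu by blast
    qed
  qed
qed



lemma NTC:
  assumes "\<And>m. m \<ge> 1 \<Longrightarrow> torsion_clean_with T m \<longleftrightarrow> Q m"
  shows "n_torsion_clean T n \<longleftrightarrow> n \<ge> 1 \<and> Q n \<and> (\<forall>m. 1 \<le> m \<and> m < n \<longrightarrow> \<not> Q m)"
  unfolding n_torsion_clean_def using assms by auto

lemma field_card2: assumes "field F" "finite (carrier F)" shows "card (carrier F) \<ge> 2"
proof -
  interpret field F by fact
  have "card {\<zero>\<^bsub>F\<^esub>, \<one>\<^bsub>F\<^esub>} \<le> card (carrier F)" by (rule card_mono[OF assms(2)]) simp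
  then show ?thesis by simp
qed

lemma part1:
  assumes F: "field F"
  shows "n_torsion_clean F n \<longleftrightarrow> finite (carrier F) \<and> n = card (carrier F) - 1"
proof -
  have e: "n_torsion_clean F n \<longleftrightarrow> n \<ge> 1 \<and> (finite (carrier F) \<and> (card (carrier F) - 1) dvd n) \<and>
      (\<forall>m. 1 \<le> m \<and> m < n \<longrightarrow> \<not> (finite (carrier F) \<and> (card (carrier F) - 1) dvd m))"
    by (rule NTC) (rule field_tc_iff[OF F])
  show ?thesis
  proof
    assume "n_torsion_clean F n"
    then have n: "n \<ge> 1" "finite (carrier F)" "(card (carrier F) - 1) dvd n"
      "\<forall>m. 1 \<le> m \<and> m < n \<longrightarrow> \<not> (finite (carrier F) \<and> (card (carrier F) - 1) dvd m)" using e by auto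
    have q: "card (carrier F) - 1 \<ge> 1" using field_card2[OF F n(2)] by simp
    have "card (carrier F) - 1 \<le> n" using n(1,3) by (simp add: dvd_imp_le)
    moreover have "\<not> card (carrier F) - 1 < n" using n(2,4) q by auto
    ultimately show "finite (carrier F) \<and> n = card (carrier F) - 1" using n(2) by simp
  next
    assume a: "finite (carrier F) \<and> n = card (carrier F) - 1"
    have q: "card (carrier F) - 1 \<ge> 1" using field_card2[OF F] a by simp
    have "\<not> (finite (carrier F) \<and> (card (carrier F) - 1) dvd m)" if "1 \<le> m" "m < n" for m
    proof
      assume "finite (carrier F) \<and> (card (carrier F) - 1) dvd m"
      then have "card (carrier F) - 1 \<le> m" using that(1) by (simp add: dvd_imp_le)
      then show False using that(2) a by simp
    qed
    then show "n_torsion_clean F n" unfolding e using a q by simp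
  qed
qed

lemma part3:
  assumes fields: "\<forall>i\<in>I. field (F i)"
  shows "n_torsion_clean (prod_ring I F) n \<longleftrightarrow>
    (\<forall>i\<in>I. finite (carrier (F i))) \<and> is_LCM ((\<lambda>i. card (carrier (F i)) - 1) ` I) n"
proof -
  define Q where "Q = (\<lambda>m. \<forall>i\<in>I. finite (carrier (F i)) \<and> (card (carrier (F i)) - 1) dvd m)"
  define S where "S = (\<lambda>i. card (carrier (F i)) - 1) ` I"
  have e: "n_torsion_clean (prod_ring I F) n \<longleftrightarrow> n \<ge> 1 \<and> Q n \<and> (\<forall>m. 1 \<le> m \<and> m < n \<longrightarrow> \<not> Q m)"
    unfolding Q_def by (rule NTC) (rule prod_tc_iff[OF fields])
  have QS: "Q m \<longleftrightarrow> (\<forall>i\<in>I. finite (carrier (F i))) \<and> (\<forall>s\<in>S. s dvd m)" for m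
    unfolding Q_def S_def by blast
  have "n \<ge> 1 \<and> Q n \<and> (\<forall>m. 1 \<le> m \<and> m < n \<longrightarrow> \<not> Q m) \<longleftrightarrow>
        (\<forall>i\<in>I. finite (carrier (F i))) \<and> is_LCM S n"
  proof
    assume a: "n \<ge> 1 \<and> Q n \<and> (\<forall>m. 1 \<le> m \<and> m < n \<longrightarrow> \<not> Q m)"
    then have fin: "\<forall>i\<in>I. finite (carrier (F i))" and dv: "\<forall>s\<in>S. s dvd n" using QS by blast+
    have "n \<le> m" if "0 < m" "\<forall>s\<in>S. s dvd m" for m
    proof (rule ccontr)
      assume "\<not> n \<le> m"
      then have "1 \<le> m \<and> m < n" using that by simp
      then have "\<not> Q m" using a by blast
      moreover have "Q m" using QS fin that(2) by blast
      ultimately show False by blast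
    qed
    then show "(\<forall>i\<in>I. finite (carrier (F i))) \<and> is_LCM S n"
      unfolding is_LCM_def using fin dv a by auto
  next
    assume a: "(\<forall>i\<in>I. finite (carrier (F i))) \<and> is_LCM S n"
    then have fin: "\<forall>i\<in>I. finite (carrier (F i))" and n0: "0 < n" and dv: "\<forall>s\<in>S. s dvd n"
      and least: "\<And>m. 0 < m \<Longrightarrow> (\<forall>s\<in>S. s dvd m) \<Longrightarrow> n \<le> m"
      unfolding is_LCM_def by blast+
    have "\<not> Q m" if "1 \<le> m" "m < n" for m
    proof
      assume "Q m"
      then have "\<forall>s\<in>S. s dvd m" using QS by blast
      then have "n \<le> m" using least that by simp
      then show False using that by simp
    qed
    moreover have "Q n" using QS fin dv by blast
    ultimately show "n \<ge> 1 \<and> Q n \<and> (\<forall>m. 1 \<le> m \<and> m < n \<longrightarrow> \<not> Q m)" using n0 by auto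
  qed
  then show ?thesis using e unfolding S_def by simp
qed

lemma part2:
  assumes "finite I" "\<forall>i\<in>I. field (F i) \<and> finite (carrier (F i))"
    "n = Lcm ((\<lambda>i. card (carrier (F i)) - 1) ` I)"
  shows "n_torsion_clean (prod_ring I F) n"
proof -
  define S where "S = (\<lambda>i. card (carrier (F i)) - 1) ` I"
  have "0 \<notin> S"
  proof
    assume "0 \<in> S"
    then obtain i where i: "i \<in> I" "card (carrier (F i)) - 1 = 0" unfolding S_def by (auto simp del: diff_is_0_eq)
    then have "card (carrier (F i)) \<ge> 2" using assms(2) field_card2 by blast
    then show False using i by simp
  qed
  moreover have "finite S" unfolding S_def using assms(1) by simp
  ultimately have n0: "n \<noteq> 0" using assms(3) Lcm_0_iff[of S] unfolding S_def by simp
  have "is_LCM S n" unfolding is_LCM_def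
  proof (intro conjI allI impI ballI)
    show "0 < n" using n0 by simp
    fix s assume "s \<in> S" then show "s dvd n" unfolding assms(3) S_def by (rule dvd_Lcm)
  next
    fix m assume m: "0 < m \<and> (\<forall>s\<in>S. s dvd m)"
    then have "n dvd m" unfolding assms(3) S_def by (intro Lcm_least) blast
    then show "n \<le> m" using m by (simp add: dvd_imp_le)
  qed
  moreover have "\<forall>i\<in>I. field (F i)" "\<forall>i\<in>I. finite (carrier (F i))" using assms(2) by simp_all
  ultimately show ?thesis using part3[of I F n] unfolding S_def by simp
qed

lemma part4:
  assumes "ring R" "\<forall>i\<in>I. field (F i)" "subdirect_product R I F h"
  shows "n_torsion_clean R n \<longleftrightarrow> n_torsion_clean (prod_ring I F) n"
proof -
  let ?Q = "\<lambda>m. \<forall>i\<in>I. finite (carrier (F i)) \<and> (card (carrier (F i)) - 1) dvd m"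
  have "n_torsion_clean R n \<longleftrightarrow> n \<ge> 1 \<and> ?Q n \<and> (\<forall>m. 1 \<le> m \<and> m < n \<longrightarrow> \<not> ?Q m)"
    by (rule NTC) (rule ring.sub_tc_iff[OF assms])
  moreover have "n_torsion_clean (prod_ring I F) n \<longleftrightarrow> n \<ge> 1 \<and> ?Q n \<and> (\<forall>m. 1 \<le> m \<and> m < n \<longrightarrow> \<not> ?Q m)"
    by (rule NTC) (rule prod_tc_iff[OF assms(2)])
  ultimately show ?thesis by simp
qed

theorem proposition2p8:
  shows
   "(\<forall>(F :: ('a, 'b) ring_scheme) n. field F \<longrightarrow>
       (n_torsion_clean F n \<longleftrightarrow> finite (carrier F) \<and> n = card (carrier F) - 1))
  \<and> (\<forall>(I :: 'i set) (F :: 'i \<Rightarrow> ('c, 'd) ring_scheme) n.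
       finite I \<and> (\<forall>i \<in> I. field (F i) \<and> finite (carrier (F i))) \<and>
       n = Lcm ((\<lambda>i. card (carrier (F i)) - 1) ` I) \<longrightarrow>
       n_torsion_clean (prod_ring I F) n)
  \<and> (\<forall>(I :: 'j set) (F :: 'j \<Rightarrow> ('e, 'f) ring_scheme) n.
       (\<forall>i \<in> I. field (F i)) \<longrightarrow>
       (n_torsion_clean (prod_ring I F) n \<longleftrightarrow>
          (\<forall>i \<in> I. finite (carrier (F i))) \<and> is_LCM ((\<lambda>i. card (carrier (F i)) - 1) ` I) n))
  \<and> (\<forall>(R :: ('g, 'h) ring_scheme) (I :: 'k set) (F :: 'k \<Rightarrow> ('l, 'm) ring_scheme) h n.
       ring R \<and> (\<forall>i \<in> I. field (F i)) \<and> subdirect_product R I F h \<longrightarrow>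
       (n_torsion_clean R n \<longleftrightarrow> n_torsion_clean (prod_ring I F) n))"
proof (intro conjI allI impI)
  fix F :: "('a, 'b) ring_scheme" and n :: nat
  assume "field F" then show "n_torsion_clean F n \<longleftrightarrow> finite (carrier F) \<and> n = card (carrier F) - 1"
    by (rule part1)
next
  fix I :: "'i set" and F :: "'i \<Rightarrow> ('c, 'd) ring_scheme" and n :: nat
  assume "finite I \<and> (\<forall>i \<in> I. field (F i) \<and> finite (carrier (F i))) \<and>
       n = Lcm ((\<lambda>i. card (carrier (F i)) - 1) ` I)"
  then show "n_torsion_clean (prod_ring I F) n" using part2[of I F n] by simp
next
  fix I :: "'j set" and F :: "'j \<Rightarrow> ('e, 'f) ring_scheme" and n :: nat
  assume "\<forall>i \<in> I. field (F i)"
  then show "n_torsion_clean (prod_ring I F) n \<longleftrightarrow>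
          (\<forall>i \<in> I. finite (carrier (F i))) \<and> is_LCM ((\<lambda>i. card (carrier (F i)) - 1) ` I) n"
    by (rule part3)
next
  fix R :: "('g, 'h) ring_scheme" and I :: "'k set" and F :: "'k \<Rightarrow> ('l, 'm) ring_scheme" and h n
  assume "ring R \<and> (\<forall>i \<in> I. field (F i)) \<and> subdirect_product R I F h"
  then show "n_torsion_clean R n \<longleftrightarrow> n_torsion_clean (prod_ring I F) n"
    using part4[of R I F h n] by simp
qed

end
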